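(* The map $\Phi$ has the following properties: (P1) $\Phi$ is linear; (P2) $\Phi(X^\top)=\Phi(X)^\top$ for all $X$; (P3) for every skew-symmetric $X$, $\Phi(X)=P_qXP_q^\top$; (P4) if $X$ is positive semidefinite then so is $\Phi(X)$; (P5) if all entries of $X$ are nonnegative then all entries of $\Phi(X)$ are nonnegative; (P6) $\Phi(J)=J$; (P7) if moreover $P=P^\top$, then $\mathrm{Tr}\,\Phi(X)\le\mathrm{Tr}\,X$ for every positive semidefinite $X$.
   Context: $P=(p_{ij})$ is a row-stochastic $N\times N$ matrix, $q\in[0,1]$, $P_q=(1-q)I+qP$, $J=\mathbf 1\mathbf 1^\top/N$ with $\mathbf 1$ the all-ones vector. $\beta_1,\dots,\beta_N$ are independent random variables in $\{1,\dots,N\}$ with $\mathbb P(\beta_i=j)=p_{ij}$, $e_i$ the standard basis vectors, $K=(1-q)I+q\sum_i e_ie_{\beta_i}^\top$, and $\Phi(X)=\mathbb E[KXK^\top]$ for $X\in\mathbb R^{N\times N}$. *)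

theory Defs
  imports "HOL-Analysis.Analysis"
begin

text \<open>N x N real matrices are modelled as real^'n^'n with 'n a finite index type, N = CARD('n).\<close>

definition row_stochastic :: "real^'n^'n \<Rightarrow> bool" where
  "row_stochastic P \<longleftrightarrow> (\<forall>i j. P $ i $ j \<ge> 0) \<and> (\<forall>i. (\<Sum>j\<in>UNIV. P $ i $ j) = 1)"

definition Pq :: "real \<Rightarrow> real^'n^'n \<Rightarrow> real^'n^'n" where
  "Pq q P = (1 - q) *\<^sub>R mat 1 + q *\<^sub>R P"

definition Jmat :: "real^'n^'n" where
  "Jmat = (\<chi> i j. 1 / real CARD('n))"

text \<open>K for a realisation b of (beta_1,...,beta_N): K = (1-q) I + q sum_i e_i e_(b i)^T.\<close>
definition Kmat :: "real \<Rightarrow> ('n \<Rightarrow> 'n) \<Rightarrow> real^'n^'n" where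
  "Kmat q b = (1 - q) *\<^sub>R mat 1 + q *\<^sub>R (\<Sum>i\<in>UNIV. (\<chi> r c. (if r = i then 1 else 0) * (if c = b i then 1 else 0)))"

text \<open>Probability that (beta_1,...,beta_N) = (b 1,...,b N): the beta_i are independent with P(beta_i = j) = p_ij.\<close>
definition beta_prob :: "real^'n^'n \<Rightarrow> ('n \<Rightarrow> 'n) \<Rightarrow> real" where
  "beta_prob P b = (\<Prod>i\<in>UNIV. P $ i $ (b i))"

text \<open>Phi(X) = E[K X K^T], the expectation over the (finite) joint law of the beta_i.\<close>
definition Phi :: "real \<Rightarrow> real^'n^'n \<Rightarrow> real^'n^'n \<Rightarrow> real^'n^'n" where
  "Phi q P X = (\<Sum>b\<in>UNIV. beta_prob P b *\<^sub>R (Kmat q b ** X ** transpose (Kmat q b)))"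

definition psd :: "real^'n^'n \<Rightarrow> bool" where
  "psd X \<longleftrightarrow> transpose X = X \<and> (\<forall>v. 0 \<le> v \<bullet> (X *v v))"

definition mtrace :: "real^'n^'n \<Rightarrow> real" where
  "mtrace X = (\<Sum>i\<in>UNIV. X $ i $ i)"

end

theory Submission imports Defs begin

lemma sum_prod_fun:
  fixes h :: "'n::finite \<Rightarrow> 'm::finite \<Rightarrow> real"
  shows "(\<Sum>b\<in>UNIV. \<Prod>m\<in>UNIV. h m (b m)) = (\<Prod>m\<in>UNIV. \<Sum>x\<in>UNIV. h m x)"
  using prod_sum_PiE[of UNIV "\<lambda>_. UNIV" h] by (simp add: PiE_UNIV_domain)

lemma prod_if2:
  fixes A B :: real
  assumes "i \<noteq> (j::'n::finite)"
  shows "(\<Prod>m\<in>UNIV. if m = i then A else if m = j then B else 1) = A * B"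
proof -
  have "(\<Prod>m\<in>UNIV. if m = i then A else if m = j then B else 1)
     = A * (\<Prod>m\<in>UNIV-{i}. if m = i then A else if m = j then B else 1)"
    by (subst prod.remove[of UNIV i]) auto
  moreover have "(\<Prod>m\<in>UNIV-{i}. if m = i then A else if m = j then B else 1) = (\<Prod>m\<in>UNIV-{i}. if m = j then B else 1)"
    by (rule prod.cong) auto
  moreover have "(\<Prod>m\<in>UNIV-{i}. if m = j then B else 1) = B" using assms by (simp add: prod.delta)
  ultimately show ?thesis by simp
qed

lemma E_single:
  assumes rs: "\<And>m. (\<Sum>x\<in>UNIV. P $ m $ x) = 1"
  shows "(\<Sum>b\<in>UNIV. beta_prob P b * f (b i)) = (\<Sum>x\<in>UNIV. P $ i $ x * f x)"
proof -
  have "(\<Sum>b\<in>UNIV. beta_prob P b * f (b i)) = (\<Sum>b\<in>UNIV. \<Prod>m\<in>UNIV. P $ m $ (b m) * (if m = i then f (b m) else 1))"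
    by (simp add: beta_prob_def prod.distrib prod.delta)
  also have "\<dots> = (\<Prod>m\<in>UNIV. \<Sum>x\<in>UNIV. P $ m $ x * (if m = i then f x else 1))"
    by (rule sum_prod_fun)
  also have "\<dots> = (\<Prod>m\<in>UNIV. if m = i then (\<Sum>x\<in>UNIV. P $ i $ x * f x) else 1)"
    by (rule prod.cong) (auto simp: rs)
  also have "\<dots> = (\<Sum>x\<in>UNIV. P $ i $ x * f x)" by (simp add: prod.delta)
  finally show ?thesis .
qed

lemma E_double:
  assumes rs: "\<And>m. (\<Sum>x\<in>UNIV. P $ m $ x) = 1" and ij: "i \<noteq> j"
  shows "(\<Sum>b\<in>UNIV. beta_prob P b * (f (b i) * g (b j))) = (\<Sum>x\<in>UNIV. P $ i $ x * f x) * (\<Sum>x\<in>UNIV. P $ j $ x * g x)"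
proof -
  have "(\<Sum>b\<in>UNIV. beta_prob P b * (f (b i) * g (b j))) = (\<Sum>b\<in>UNIV. \<Prod>m\<in>UNIV. P $ m $ (b m) * (if m = i then f (b m) else if m = j then g (b m) else 1))"
  proof (rule sum.cong[OF refl])
    fix b :: "'a \<Rightarrow> 'a"
    have "(\<Prod>m\<in>UNIV. if m = i then f (b m) else if m = j then g (b m) else 1)
        = (\<Prod>m\<in>UNIV. if m = i then f (b i) else if m = j then g (b j) else 1)"
      by (rule prod.cong) auto
    also have "\<dots> = f (b i) * g (b j)" by (rule prod_if2[OF ij])
    finally show "beta_prob P b * (f (b i) * g (b j)) = (\<Prod>m\<in>UNIV. P $ m $ (b m) * (if m = i then f (b m) else if m = j then g (b m) else 1))"
      by (simp add: beta_prob_def prod.distrib)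
  qed
  also have "\<dots> = (\<Prod>m\<in>UNIV. \<Sum>x\<in>UNIV. P $ m $ x * (if m = i then f x else if m = j then g x else 1))"
    by (rule sum_prod_fun)
  also have "\<dots> = (\<Prod>m\<in>UNIV. if m = i then (\<Sum>x\<in>UNIV. P $ i $ x * f x) else if m = j then (\<Sum>x\<in>UNIV. P $ j $ x * g x) else 1)"
    by (rule prod.cong) (auto simp: rs)
  also have "\<dots> = (\<Sum>x\<in>UNIV. P $ i $ x * f x) * (\<Sum>x\<in>UNIV. P $ j $ x * g x)" by (rule prod_if2[OF ij])
  finally show ?thesis .
qed


lemma Kmat_entry: "Kmat q b $ r $ c = (1-q) * (if r = c then 1 else 0) + q * (if c = b r then 1 else 0)"
proof -
  have "(\<Sum>i\<in>UNIV. (if r = i then 1 else 0) * (if c = b i then 1 else (0::real))) = (if c = b r then 1 else 0)"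
  proof -
    have "(\<Sum>i\<in>UNIV. (if r = i then 1 else 0) * (if c = b i then 1 else (0::real)))
        = (\<Sum>i\<in>UNIV. if r = i then (if c = b i then 1 else 0) else 0)"
      by (intro sum.cong refl) simp
    also have "\<dots> = (if c = b r then 1 else 0)" by simp
    finally show ?thesis .
  qed
  then show ?thesis by (simp add: Kmat_def mat_def)
qed

lemma Pq_entry: "Pq q P $ i $ k = (1-q) * (if i = k then 1 else 0) + q * P $ i $ k"
  by (simp add: Pq_def mat_def)

lemma sum_delta_P: "(\<Sum>x\<in>UNIV. (P::real^'n^'n) $ i $ x * (if k = x then 1 else 0)) = P $ i $ k"
  by (simp add: if_distrib cong: if_cong)

lemma sum_aff:
  fixes P :: "real^'n^'n"
  assumes rs: "\<And>m. (\<Sum>x\<in>UNIV. P $ m $ x) = 1"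
  shows "(\<Sum>x\<in>UNIV. P $ i $ x * ((1-q) * c + q * (if k = x then 1 else 0))) = (1-q) * c + q * P $ i $ k"
proof -
  have "(\<Sum>x\<in>UNIV. P $ i $ x * ((1-q) * c + q * (if k = x then 1 else 0)))
     = (\<Sum>x\<in>UNIV. ((1-q) * c) * P $ i $ x + q * (P $ i $ x * (if k = x then 1 else 0)))"
    by (intro sum.cong refl) (simp add: ring_distribs mult_ac)
  also have "\<dots> = (1-q) * c * (\<Sum>x\<in>UNIV. P $ i $ x) + q * (\<Sum>x\<in>UNIV. P $ i $ x * (if k = x then 1 else 0))"
    by (simp only: sum.distrib sum_distrib_left[symmetric])
  finally show ?thesis using rs by (simp add: sum_delta_P)
qed

definition Cc :: "real \<Rightarrow> real^'n^'n \<Rightarrow> 'n \<Rightarrow> 'n \<Rightarrow> 'n \<Rightarrow> 'n \<Rightarrow> real" where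
  "Cc q P i j k l = Pq q P $ i $ k * Pq q P $ j $ l
     + (if i = j then q^2 * ((if k = l then P $ i $ k else 0) - P $ i $ k * P $ i $ l) else 0)"

lemma E_K:
  assumes rs: "\<And>m. (\<Sum>x\<in>UNIV. P $ m $ x) = 1"
  shows "(\<Sum>b\<in>UNIV. beta_prob P b * (Kmat q b $ i $ k * Kmat q b $ j $ l)) = Cc q P i j k l"
proof (cases "i = j")
  case False
  have "(\<Sum>b\<in>UNIV. beta_prob P b * (Kmat q b $ i $ k * Kmat q b $ j $ l))
    = (\<Sum>b\<in>UNIV. beta_prob P b * (((\<lambda>x. (1-q) * (if i = k then 1 else 0) + q * (if k = x then 1 else 0)) (b i))
        * ((\<lambda>x. (1-q) * (if j = l then 1 else 0) + q * (if l = x then 1 else 0)) (b j))))"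
    by (simp add: Kmat_entry eq_commute)
  also have "\<dots> = Cc q P i j k l"
    by (subst E_double[OF rs False]) (simp add: sum_aff[OF rs] Cc_def Pq_entry False)
  finally show ?thesis .
next
  case True
  have "(\<Sum>b\<in>UNIV. beta_prob P b * (Kmat q b $ i $ k * Kmat q b $ j $ l))
    = (\<Sum>b\<in>UNIV. beta_prob P b * (\<lambda>x. ((1-q) * (if i = k then 1 else 0) + q * (if k = x then 1 else 0))
        * ((1-q) * (if i = l then 1 else 0) + q * (if l = x then 1 else 0))) (b i))"
    using True by (simp add: Kmat_entry eq_commute)
  also have "\<dots> = (\<Sum>x\<in>UNIV. P $ i $ x * (((1-q) * (if i = k then 1 else 0) + q * (if k = x then 1 else 0))
        * ((1-q) * (if i = l then 1 else 0) + q * (if l = x then 1 else 0))))"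
    by (rule E_single[OF rs])
  also have "\<dots> = (\<Sum>x\<in>UNIV. ((1-q) * (if i = k then 1 else 0) * ((1-q) * (if i = l then 1 else 0))) * P $ i $ x
      + (1-q) * (if i = k then 1 else 0) * q * (P $ i $ x * (if l = x then 1 else 0))
      + (1-q) * (if i = l then 1 else 0) * q * (P $ i $ x * (if k = x then 1 else 0))
      + q^2 * (if k = l then 1 else 0) * (P $ i $ x * (if k = x then 1 else 0)))"
    by (rule sum.cong) (auto simp: algebra_simps power2_eq_square)
  also have "\<dots> = ((1-q) * (if i = k then 1 else 0) * ((1-q) * (if i = l then 1 else 0))) * (\<Sum>x\<in>UNIV. P $ i $ x)
      + (1-q) * (if i = k then 1 else 0) * q * (\<Sum>x\<in>UNIV. P $ i $ x * (if l = x then 1 else 0))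
      + (1-q) * (if i = l then 1 else 0) * q * (\<Sum>x\<in>UNIV. P $ i $ x * (if k = x then 1 else 0))
      + q^2 * (if k = l then 1 else 0) * (\<Sum>x\<in>UNIV. P $ i $ x * (if k = x then 1 else 0))"
    by (simp only: sum.distrib sum_distrib_left[symmetric])
  also have "\<dots> = ((1-q) * (if i = k then 1 else 0) * ((1-q) * (if i = l then 1 else 0)))
      + (1-q) * (if i = k then 1 else 0) * q * P $ i $ l
      + (1-q) * (if i = l then 1 else 0) * q * P $ i $ k
      + q^2 * (if k = l then 1 else 0) * P $ i $ k"
    by (simp only: rs sum_delta_P mult_1_right)
  also have "\<dots> = Cc q P i j k l"
    using True by (auto simp: Cc_def Pq_entry algebra_simps power2_eq_square)
  finally show ?thesis .
qed


lemma triple_entry: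
  fixes A X :: "real^'n^'n"
  shows "(A ** X ** transpose A) $ i $ j = (\<Sum>k\<in>UNIV. \<Sum>l\<in>UNIV. X $ k $ l * (A $ i $ k * A $ j $ l))"
proof -
  have "(A ** X ** transpose A) $ i $ j = (\<Sum>l\<in>UNIV. (\<Sum>k\<in>UNIV. A $ i $ k * X $ k $ l) * A $ j $ l)"
    by (simp add: matrix_matrix_mult_def transpose_def)
  also have "\<dots> = (\<Sum>l\<in>UNIV. \<Sum>k\<in>UNIV. X $ k $ l * (A $ i $ k * A $ j $ l))"
    unfolding sum_distrib_right by (intro sum.cong refl) (simp add: mult_ac)
  also have "\<dots> = (\<Sum>k\<in>UNIV. \<Sum>l\<in>UNIV. X $ k $ l * (A $ i $ k * A $ j $ l))"
    by (rule sum.swap)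
  finally show ?thesis .
qed

lemma Phi_entry0: "Phi q P X $ i $ j = (\<Sum>b\<in>UNIV. beta_prob P b * (Kmat q b ** X ** transpose (Kmat q b)) $ i $ j)"
  by (simp add: Phi_def)

lemma Phi_entry:
  assumes rs: "\<And>m. (\<Sum>x\<in>UNIV. P $ m $ x) = 1"
  shows "Phi q P X $ i $ j = (\<Sum>k\<in>UNIV. \<Sum>l\<in>UNIV. X $ k $ l * Cc q P i j k l)"
proof -
  have "Phi q P X $ i $ j = (\<Sum>b\<in>UNIV. \<Sum>k\<in>UNIV. \<Sum>l\<in>UNIV. beta_prob P b * (X $ k $ l * (Kmat q b $ i $ k * Kmat q b $ j $ l)))"
    by (simp add: Phi_entry0 triple_entry sum_distrib_left)
  also have "\<dots> = (\<Sum>k\<in>UNIV. \<Sum>b\<in>UNIV. \<Sum>l\<in>UNIV. beta_prob P b * (X $ k $ l * (Kmat q b $ i $ k * Kmat q b $ j $ l)))"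
    by (rule sum.swap)
  also have "\<dots> = (\<Sum>k\<in>UNIV. \<Sum>l\<in>UNIV. \<Sum>b\<in>UNIV. beta_prob P b * (X $ k $ l * (Kmat q b $ i $ k * Kmat q b $ j $ l)))"
    by (intro sum.cong refl) (rule sum.swap)
  also have "\<dots> = (\<Sum>k\<in>UNIV. \<Sum>l\<in>UNIV. X $ k $ l * (\<Sum>b\<in>UNIV. beta_prob P b * (Kmat q b $ i $ k * Kmat q b $ j $ l)))"
    by (simp add: sum_distrib_left mult_ac)
  finally show ?thesis by (simp add: E_K[OF rs])
qed


lemma Cc_sym: "Cc q P j i l k = Cc q P i j k l"
  by (auto simp: Cc_def mult_ac)

lemma Phi_transpose:
  assumes rs: "\<And>m. (\<Sum>x\<in>UNIV. P $ m $ x) = 1"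
  shows "Phi q P (transpose X) = transpose (Phi q P X)"
proof -
  have "Phi q P (transpose X) $ i $ j = transpose (Phi q P X) $ i $ j" for i j
  proof -
    have "transpose (Phi q P X) $ i $ j = (\<Sum>k\<in>UNIV. \<Sum>l\<in>UNIV. X $ k $ l * Cc q P j i k l)"
      by (simp add: transpose_def Phi_entry[OF rs])
    also have "\<dots> = (\<Sum>l\<in>UNIV. \<Sum>k\<in>UNIV. X $ k $ l * Cc q P j i k l)" by (rule sum.swap)
    also have "\<dots> = Phi q P (transpose X) $ i $ j"
      by (simp add: transpose_def Phi_entry[OF rs] Cc_sym)
    finally show ?thesis by simp
  qed
  then show ?thesis by (simp add: vec_eq_iff)
qed

lemma Phi_linear:
  assumes rs: "\<And>m. (\<Sum>x\<in>UNIV. P $ m $ x) = 1"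
  shows "linear (Phi q P)"
proof (rule linearI)
  fix X Y and c :: real
  show "Phi q P (X + Y) = Phi q P X + Phi q P Y"
    by (simp add: vec_eq_iff Phi_entry[OF rs] distrib_right sum.distrib)
  show "Phi q P (c *\<^sub>R X) = c *\<^sub>R Phi q P X"
    by (simp add: vec_eq_iff Phi_entry[OF rs] sum_distrib_left mult.assoc)
qed

lemma skew_sum:
  fixes X :: "real^'n^'n"
  assumes sk: "transpose X = - X" and D: "\<And>k l. D k l = D l k"
  shows "(\<Sum>k\<in>UNIV. \<Sum>l\<in>UNIV. X $ k $ l * D k l) = 0"
proof -
  have x: "X $ l $ k = - X $ k $ l" for k l
    using arg_cong[OF sk, of "\<lambda>M. M $ k $ l"] by (simp add: transpose_def)
  have "(\<Sum>k\<in>UNIV. \<Sum>l\<in>UNIV. X $ k $ l * D k l) = (\<Sum>l\<in>UNIV. \<Sum>k\<in>UNIV. X $ k $ l * D k l)" by (rule sum.swap)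
  also have "\<dots> = - (\<Sum>k\<in>UNIV. \<Sum>l\<in>UNIV. X $ k $ l * D k l)"
  proof -
    have e: "X $ k $ l * D k l = - (X $ l $ k * D l k)" for k l
      using x[of l k] D[of k l] by simp
    have "(\<Sum>l\<in>UNIV. \<Sum>k\<in>UNIV. X $ k $ l * D k l) = (\<Sum>l\<in>UNIV. \<Sum>k\<in>UNIV. - (X $ l $ k * D l k))"
      by (intro sum.cong refl) (rule e)
    then show ?thesis by (simp only: sum_negf)
  qed
  finally show ?thesis by simp
qed

lemma Phi_skew:
  assumes rs: "\<And>m. (\<Sum>x\<in>UNIV. P $ m $ x) = 1" and sk: "transpose X = - X"
  shows "Phi q P X = Pq q P ** X ** transpose (Pq q P)"
proof -
  have "Phi q P X $ i $ j = (Pq q P ** X ** transpose (Pq q P)) $ i $ j" for i j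
  proof -
    define D where "D k l = (if i = j then q^2 * ((if k = l then P $ i $ k else 0) - P $ i $ k * P $ i $ l) else 0)" for k l
    have Ds: "D k l = D l k" for k l by (auto simp: D_def mult_ac)
    have "Phi q P X $ i $ j = (\<Sum>k\<in>UNIV. \<Sum>l\<in>UNIV. X $ k $ l * (Pq q P $ i $ k * Pq q P $ j $ l) + X $ k $ l * D k l)"
      by (simp add: Phi_entry[OF rs] Cc_def D_def distrib_left)
    also have "\<dots> = (\<Sum>k\<in>UNIV. \<Sum>l\<in>UNIV. X $ k $ l * (Pq q P $ i $ k * Pq q P $ j $ l)) + (\<Sum>k\<in>UNIV. \<Sum>l\<in>UNIV. X $ k $ l * D k l)"
      by (simp add: sum.distrib)
    also have "\<dots> = (Pq q P ** X ** transpose (Pq q P)) $ i $ j"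
      by (simp add: skew_sum[OF sk Ds] triple_entry)
    finally show ?thesis .
  qed
  then show ?thesis by (simp add: vec_eq_iff)
qed

lemma quad_entry: "(v::real^'n) \<bullet> (M *v v) = (\<Sum>i\<in>UNIV. \<Sum>j\<in>UNIV. v $ i * M $ i $ j * v $ j)"
  by (simp add: inner_vec_def matrix_vector_mult_def sum_distrib_left mult_ac)

lemma quad_sum:
  fixes M :: "'b \<Rightarrow> real^'n^'n"
  assumes "finite S"
  shows "(v::real^'n) \<bullet> ((\<Sum>b\<in>S. c b *\<^sub>R M b) *v v) = (\<Sum>b\<in>S. c b * (v \<bullet> (M b *v v)))"
proof -
  have "(v::real^'n) \<bullet> ((\<Sum>b\<in>S. c b *\<^sub>R M b) *v v) = (\<Sum>i\<in>UNIV. \<Sum>j\<in>UNIV. \<Sum>b\<in>S. c b * (v $ i * M b $ i $ j * v $ j))"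
    by (simp add: quad_entry sum_distrib_left sum_distrib_right mult_ac)
  also have "\<dots> = (\<Sum>i\<in>UNIV. \<Sum>b\<in>S. \<Sum>j\<in>UNIV. c b * (v $ i * M b $ i $ j * v $ j))"
    by (intro sum.cong refl) (rule sum.swap)
  also have "\<dots> = (\<Sum>b\<in>S. \<Sum>i\<in>UNIV. \<Sum>j\<in>UNIV. c b * (v $ i * M b $ i $ j * v $ j))"
    by (rule sum.swap)
  also have "\<dots> = (\<Sum>b\<in>S. c b * (v \<bullet> (M b *v v)))"
    by (simp add: quad_entry sum_distrib_left)
  finally show ?thesis .
qed

lemma quad_congr:
  fixes K X :: "real^'n^'n"
  shows "v \<bullet> ((K ** X ** transpose K) *v v) = (transpose K *v v) \<bullet> (X *v (transpose K *v v))"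
proof -
  have "v \<bullet> ((K ** X ** transpose K) *v v) = v \<bullet> (K *v (X *v (transpose K *v v)))"
    by (simp only: matrix_vector_mul_assoc matrix_mul_assoc)
  also have "\<dots> = (v v* K) \<bullet> (X *v (transpose K *v v))"
    by (simp only: dot_lmul_matrix)
  finally show ?thesis by simp
qed

lemma beta_prob_nonneg: "row_stochastic P \<Longrightarrow> 0 \<le> beta_prob P b"
  by (simp add: beta_prob_def row_stochastic_def prod_nonneg)

lemma Phi_psd:
  assumes rsd: "row_stochastic P" and X: "psd X"
  shows "psd (Phi q P X)"
proof -
  have rs: "\<And>m. (\<Sum>x\<in>UNIV. P $ m $ x) = 1" using rsd by (simp add: row_stochastic_def)
  have "transpose (Phi q P X) = Phi q P X"
    using X by (simp add: Phi_transpose[OF rs, symmetric] psd_def)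
  moreover have "0 \<le> v \<bullet> (Phi q P X *v v)" for v
    unfolding Phi_def
    by (simp add: quad_sum quad_congr) (use X beta_prob_nonneg[OF rsd] in \<open>auto intro!: sum_nonneg mult_nonneg_nonneg simp: psd_def\<close>)
  ultimately show ?thesis by (simp add: psd_def)
qed

lemma Kmat_nonneg: "0 \<le> q \<Longrightarrow> q \<le> 1 \<Longrightarrow> 0 \<le> Kmat q b $ r $ c"
  by (simp add: Kmat_entry)

lemma Phi_nonneg:
  assumes rsd: "row_stochastic P" and q: "0 \<le> q" "q \<le> 1" and X: "\<forall>i j. 0 \<le> X $ i $ j"
  shows "0 \<le> Phi q P X $ i $ j"
  unfolding Phi_entry0 triple_entry
proof (intro sum_nonneg mult_nonneg_nonneg)
  fix b k l
  show "0 \<le> beta_prob P b" by (rule beta_prob_nonneg[OF rsd])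
  show "0 \<le> X $ k $ l" using X by simp
  show "0 \<le> Kmat q b $ i $ k" "0 \<le> Kmat q b $ j $ l" using Kmat_nonneg[OF q] by auto
qed


lemma sum_delta_f: "(\<Sum>x\<in>UNIV. ((f::'n::finite \<Rightarrow> real) x) * (if k = x then 1 else 0)) = f k"
proof -
  have "(\<Sum>x\<in>UNIV. f x * (if k = x then 1 else 0)) = (\<Sum>x\<in>UNIV. if k = x then f x else 0)"
    by (intro sum.cong refl) simp
  also have "\<dots> = f k" by simp
  finally show ?thesis .
qed

lemma rowsum_Pq:
  assumes rs: "\<And>m. (\<Sum>x\<in>UNIV. P $ m $ x) = 1"
  shows "(\<Sum>k\<in>UNIV. Pq q P $ i $ k) = 1"
proof -
  have "(\<Sum>k\<in>UNIV. Pq q P $ i $ k) = (\<Sum>k\<in>UNIV. (1-q) * (if i = k then 1 else 0) + q * P $ i $ k)"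
    by (simp add: Pq_entry)
  also have "\<dots> = (1-q) * (\<Sum>k\<in>UNIV. (if i = k then 1 else 0)) + q * (\<Sum>k\<in>UNIV. P $ i $ k)"
    by (simp only: sum.distrib sum_distrib_left[symmetric])
  finally show ?thesis using rs by simp
qed

lemma sum_Cc:
  assumes rs: "\<And>m. (\<Sum>x\<in>UNIV. P $ m $ x) = 1"
  shows "(\<Sum>k\<in>UNIV. \<Sum>l\<in>UNIV. Cc q P i j k l) = 1"
proof (cases "i = j")
  case False
  have "(\<Sum>k\<in>UNIV. \<Sum>l\<in>UNIV. Cc q P i j k l) = (\<Sum>k\<in>UNIV. Pq q P $ i $ k * (\<Sum>l\<in>UNIV. Pq q P $ j $ l))"
    using False by (simp add: Cc_def sum_distrib_left)
  also have "\<dots> = 1" by (simp add: rowsum_Pq[OF rs])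
  finally show ?thesis .
next
  case True
  have "(\<Sum>l\<in>UNIV. Cc q P i j k l) = Pq q P $ i $ k" for k
  proof -
    have "(\<Sum>l\<in>UNIV. Cc q P i j k l) = (\<Sum>l\<in>UNIV. Pq q P $ i $ k * Pq q P $ i $ l + q^2 * (P $ i $ l * (if k = l then 1 else 0)) - (q^2 * P $ i $ k) * P $ i $ l)"
      using True by (intro sum.cong refl) (auto simp: Cc_def algebra_simps)
    also have "\<dots> = Pq q P $ i $ k * (\<Sum>l\<in>UNIV. Pq q P $ i $ l) + q^2 * (\<Sum>l\<in>UNIV. P $ i $ l * (if k = l then 1 else 0)) - (q^2 * P $ i $ k) * (\<Sum>l\<in>UNIV. P $ i $ l)"
      by (simp only: sum.distrib sum_subtractf sum_distrib_left[symmetric])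
    also have "\<dots> = Pq q P $ i $ k"
      by (simp only: rowsum_Pq[OF rs] rs sum_delta_f mult_1_right diff_self add_0_right)
    finally show ?thesis .
  qed
  then show ?thesis using rowsum_Pq[OF rs] by simp
qed

lemma Phi_J:
  assumes rs: "\<And>m. (\<Sum>x\<in>UNIV. P $ m $ x) = 1"
  shows "Phi q P Jmat = Jmat"
proof -
  have "Phi q P Jmat $ i $ j = Jmat $ i $ j" for i j
  proof -
    have "Phi q P Jmat $ i $ j = (\<Sum>k\<in>UNIV. \<Sum>l\<in>UNIV. (1 / real CARD('a)) * Cc q P i j k l)"
      by (simp add: Phi_entry[OF rs] Jmat_def)
    also have "\<dots> = (1 / real CARD('a)) * (\<Sum>k\<in>UNIV. \<Sum>l\<in>UNIV. Cc q P i j k l)"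
      by (simp only: sum_distrib_left)
    also have "\<dots> = Jmat $ i $ j" by (simp add: sum_Cc[OF rs] Jmat_def)
    finally show ?thesis .
  qed
  then show ?thesis by (simp add: vec_eq_iff)
qed

lemma psd_offdiag:
  fixes X :: "real^'n^'n"
  assumes X: "psd X"
  shows "2 * X $ i $ k \<le> X $ i $ i + X $ k $ k"
proof -
  have sym: "X $ k $ i = X $ i $ k"
    using X unfolding psd_def by (metis transpose_def vec_lambda_beta)
  let ?v = "axis i (1::real) - axis k 1 :: real^'n"
  have "0 \<le> ?v \<bullet> (X *v ?v)" using X by (simp add: psd_def)
  also have "?v \<bullet> (X *v ?v) = X $ i $ i - X $ i $ k - X $ k $ i + X $ k $ k"
    by (simp add: matrix_vector_mult_diff_distrib inner_diff_left inner_diff_right inner_axis' matrix_vector_mult_basis column_def)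
  finally show ?thesis using sym by simp
qed


lemma Cdiag: "Cc q P i i k l = (1-q)^2 * ((if i = k then 1 else 0) * (if i = l then 1 else 0))
   + (1-q) * q * ((if i = k then 1 else 0) * P $ i $ l + (if i = l then 1 else 0) * P $ i $ k)
   + q^2 * ((if k = l then 1 else 0) * P $ i $ k)"
  by (cases "i = k"; cases "i = l"; cases "k = l") (simp_all add: Cc_def Pq_entry power2_eq_square algebra_simps)

lemma trace_row:
  fixes X P :: "real^'n^'n"
  shows "(\<Sum>k\<in>UNIV. \<Sum>l\<in>UNIV. X $ k $ l * Cc q P i i k l)
    = (1-q)^2 * X $ i $ i + (1-q) * q * ((\<Sum>l\<in>UNIV. X $ i $ l * P $ i $ l) + (\<Sum>k\<in>UNIV. X $ k $ i * P $ i $ k))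
      + q^2 * (\<Sum>k\<in>UNIV. X $ k $ k * P $ i $ k)"
proof -
  define A B D where "A = (1-q)^2" and "B = (1-q) * q" and "D = (q::real)^2"
  have inner: "(\<Sum>l\<in>UNIV. X $ k $ l * Cc q P i i k l)
      = A * (X $ k $ i * (if i = k then 1 else 0)) + B * ((\<Sum>l\<in>UNIV. X $ k $ l * P $ i $ l) * (if i = k then 1 else 0))
        + B * (X $ k $ i * P $ i $ k) + D * (X $ k $ k * P $ i $ k)" for k
  proof -
    have "(\<Sum>l\<in>UNIV. X $ k $ l * Cc q P i i k l)
      = (\<Sum>l\<in>UNIV. (A * (if i = k then 1 else 0)) * (X $ k $ l * (if i = l then 1 else 0))
          + (B * (if i = k then 1 else 0)) * (X $ k $ l * P $ i $ l)
          + (B * P $ i $ k) * (X $ k $ l * (if i = l then 1 else 0))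
          + (D * P $ i $ k) * (X $ k $ l * (if k = l then 1 else 0)))"
      unfolding A_def B_def D_def by (intro sum.cong refl) (simp only: Cdiag; algebra)
    also have "\<dots> = (A * (if i = k then 1 else 0)) * (\<Sum>l\<in>UNIV. X $ k $ l * (if i = l then 1 else 0))
          + (B * (if i = k then 1 else 0)) * (\<Sum>l\<in>UNIV. X $ k $ l * P $ i $ l)
          + (B * P $ i $ k) * (\<Sum>l\<in>UNIV. X $ k $ l * (if i = l then 1 else 0))
          + (D * P $ i $ k) * (\<Sum>l\<in>UNIV. X $ k $ l * (if k = l then 1 else 0))"
      by (simp only: sum.distrib sum_distrib_left[symmetric])
    also have "\<dots> = A * (X $ k $ i * (if i = k then 1 else 0)) + B * ((\<Sum>l\<in>UNIV. X $ k $ l * P $ i $ l) * (if i = k then 1 else 0))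
        + B * (X $ k $ i * P $ i $ k) + D * (X $ k $ k * P $ i $ k)"
      by (simp only: sum_delta_f[of "\<lambda>l. X $ k $ l"]) algebra
    finally show ?thesis .
  qed
  have "(\<Sum>k\<in>UNIV. \<Sum>l\<in>UNIV. X $ k $ l * Cc q P i i k l)
     = (\<Sum>k\<in>UNIV. A * (X $ k $ i * (if i = k then 1 else 0)) + B * ((\<Sum>l\<in>UNIV. X $ k $ l * P $ i $ l) * (if i = k then 1 else 0))
        + B * (X $ k $ i * P $ i $ k) + D * (X $ k $ k * P $ i $ k))"
    by (simp only: inner)
  also have "\<dots> = A * (\<Sum>k\<in>UNIV. X $ k $ i * (if i = k then 1 else 0)) + B * (\<Sum>k\<in>UNIV. (\<Sum>l\<in>UNIV. X $ k $ l * P $ i $ l) * (if i = k then 1 else 0))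
        + B * (\<Sum>k\<in>UNIV. X $ k $ i * P $ i $ k) + D * (\<Sum>k\<in>UNIV. X $ k $ k * P $ i $ k)"
    by (simp only: sum.distrib sum_distrib_left[symmetric])
  also have "\<dots> = A * X $ i $ i + B * (\<Sum>l\<in>UNIV. X $ i $ l * P $ i $ l)
        + B * (\<Sum>k\<in>UNIV. X $ k $ i * P $ i $ k) + D * (\<Sum>k\<in>UNIV. X $ k $ k * P $ i $ k)"
    by (simp only: sum_delta_f[of "\<lambda>k. X $ k $ i"] sum_delta_f[of "\<lambda>k. \<Sum>l\<in>UNIV. X $ k $ l * P $ i $ l"])
  finally show ?thesis unfolding A_def B_def D_def by algebra
qed


lemma Phi_trace:
  fixes P X :: "real^'n^'n"
  assumes rsd: "row_stochastic P" and q: "0 \<le> q" "q \<le> 1" and Ps: "transpose P = P" and X: "psd X"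
  shows "mtrace (Phi q P X) \<le> mtrace X"
proof -
  have rs: "\<And>m. (\<Sum>x\<in>UNIV. P $ m $ x) = 1" using rsd by (simp add: row_stochastic_def)
  have Pnn: "0 \<le> P $ i $ k" for i k using rsd by (simp add: row_stochastic_def)
  have Xs: "X $ k $ i = X $ i $ k" for i k
    using X unfolding psd_def by (metis transpose_def vec_lambda_beta)
  have Psym: "P $ k $ i = P $ i $ k" for i k
    using Ps by (metis transpose_def vec_lambda_beta)
  define Tr where "Tr = mtrace X"
  define T where "T = (\<Sum>i\<in>UNIV. \<Sum>l\<in>UNIV. X $ i $ l * P $ i $ l)"
  have U: "(\<Sum>i\<in>UNIV. \<Sum>k\<in>UNIV. X $ k $ k * P $ i $ k) = Tr"
  proof -
    have "(\<Sum>i\<in>UNIV. \<Sum>k\<in>UNIV. X $ k $ k * P $ i $ k) = (\<Sum>k\<in>UNIV. \<Sum>i\<in>UNIV. X $ k $ k * P $ i $ k)"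
      by (rule sum.swap)
    also have "\<dots> = (\<Sum>k\<in>UNIV. X $ k $ k * (\<Sum>i\<in>UNIV. P $ k $ i))"
      by (simp add: sum_distrib_left Psym)
    also have "\<dots> = Tr" by (simp add: rs Tr_def mtrace_def)
    finally show ?thesis .
  qed
  have R: "(\<Sum>i\<in>UNIV. \<Sum>k\<in>UNIV. X $ k $ i * P $ i $ k) = T"
    unfolding T_def by (simp add: Xs)
  have TT: "T \<le> Tr"
  proof -
    have "T \<le> (\<Sum>i\<in>UNIV. \<Sum>l\<in>UNIV. (X $ i $ i * P $ i $ l + X $ l $ l * P $ i $ l) / 2)"
      unfolding T_def
    proof (intro sum_mono)
      fix i l
      have "2 * X $ i $ l \<le> X $ i $ i + X $ l $ l" by (rule psd_offdiag[OF X])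
      then have "2 * X $ i $ l * P $ i $ l \<le> (X $ i $ i + X $ l $ l) * P $ i $ l"
        by (rule mult_right_mono) (rule Pnn)
      then show "X $ i $ l * P $ i $ l \<le> (X $ i $ i * P $ i $ l + X $ l $ l * P $ i $ l) / 2"
        by (simp add: algebra_simps)
    qed
    also have "\<dots> = ((\<Sum>i\<in>UNIV. X $ i $ i * (\<Sum>l\<in>UNIV. P $ i $ l)) + (\<Sum>i\<in>UNIV. \<Sum>l\<in>UNIV. X $ l $ l * P $ i $ l)) / 2"
      by (simp add: sum_divide_distrib[symmetric] sum.distrib sum_distrib_left)
    also have "\<dots> = Tr" using U by (simp add: rs Tr_def mtrace_def)
    finally show ?thesis .
  qed
  have "mtrace (Phi q P X) = (\<Sum>i\<in>UNIV. (1-q)^2 * X $ i $ i + (1-q) * q * ((\<Sum>l\<in>UNIV. X $ i $ l * P $ i $ l) + (\<Sum>k\<in>UNIV. X $ k $ i * P $ i $ k))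
      + q^2 * (\<Sum>k\<in>UNIV. X $ k $ k * P $ i $ k))"
    by (simp add: mtrace_def Phi_entry[OF rs] trace_row)
  also have "\<dots> = (1-q)^2 * Tr + (1-q) * q * (T + T) + q^2 * Tr"
    by (simp only: sum.distrib sum_distrib_left[symmetric] U R T_def[symmetric]) (simp add: Tr_def mtrace_def)
  finally have eq: "mtrace (Phi q P X) = (1-q)^2 * Tr + (1-q) * q * (T + T) + q^2 * Tr" .
  have B: "0 \<le> (1-q) * q" using q by simp
  have "(1-q) * q * (T + T) \<le> (1-q) * q * (Tr + Tr)"
    by (rule mult_left_mono[OF _ B]) (use TT in simp)
  moreover have "(1-q)^2 * Tr + (1-q) * q * (Tr + Tr) + q^2 * Tr = Tr" by (simp add: power2_eq_square algebra_simps)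
  ultimately show ?thesis using eq Tr_def by linarith
qed

theorem proposition1:
  fixes P :: "real^'n^'n" and q :: real
  assumes "row_stochastic P" and "0 \<le> q" and "q \<le> 1"
  shows "linear (Phi q P)
    \<and> (\<forall>X. Phi q P (transpose X) = transpose (Phi q P X))
    \<and> (\<forall>X. transpose X = - X \<longrightarrow> Phi q P X = Pq q P ** X ** transpose (Pq q P))
    \<and> (\<forall>X. psd X \<longrightarrow> psd (Phi q P X))
    \<and> (\<forall>X. (\<forall>i j. 0 \<le> X $ i $ j) \<longrightarrow> (\<forall>i j. 0 \<le> Phi q P X $ i $ j))
    \<and> (Phi q P Jmat = Jmat)
    \<and> (transpose P = P \<longrightarrow> (\<forall>X. psd X \<longrightarrow> mtrace (Phi q P X) \<le> mtrace X))"
proof -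
  have rs: "\<And>m. (\<Sum>x\<in>UNIV. P $ m $ x) = 1" using assms(1) by (simp add: row_stochastic_def)
  show ?thesis
    using Phi_linear[OF rs] Phi_transpose[OF rs] Phi_skew[OF rs] Phi_psd[OF assms(1)]
      Phi_nonneg[OF assms] Phi_J[OF rs] Phi_trace[OF assms]
    by blast
qed

end
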